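(* Let $\mathcal G$ be a principal, ubiquitously fiberwise amenable groupoid (standing conventions). Then for every compact $K\subseteq\mathcal G$ and every $\epsilon>0$ there exists a normal $(K,\epsilon)$-Følner set in $\mathcal G$.
   Context: Standing conventions: a groupoid is a $\sigma$-compact, locally compact, Hausdorff, étale, ample groupoid $\mathcal G$ with compact unit space $\mathcal G^{(0)}$. Principal: the only $g$ with $s(g)=r(g)$ are units. For $A,B\subseteq\mathcal G$, $AB$ denotes composable products and $Au=\{a\in A:s(a)=u\}$. A multisection is a finite family $\{C_{i,j}:i,j\in F\}$ of bisections with $C_{i,j}C_{j,k}=C_{i,k}$ and pairwise disjoint levels $C_{i,i}\subseteq\mathcal G^{(0)}$. A finite nonempty $F\subseteq\mathcal G$ is $(K,\epsilon)$-Følner if $|KF\setminus F|\le\epsilon|F|$. $\mathcal G$ is ubiquitously fiberwise amenable if for every compact $K$ and $\epsilon>0$ there is compact $L$ such that every $u\in\mathcal G^{(0)}$ admits a $(K,\epsilon)$-Følner set contained in $Lu\cup\{u\}$. A normal set is a compact open $S\subseteq\mathcal G$ together with compact open multisections $\{C^l_{i,j}:i,j\in F_l\}$, $l=1,\dots,m$, and indices $i_l\in F_l$ with $S=\bigcup_{l=1}^m\bigsqcup_{i\in F_l}C^l_{i,i_l}$ and $\mathcal G^{(0)}=\bigsqcup_{l=1}^mC^l_{i_l,i_l}$; it is a normal $(K,\epsilon)$-Følner set if moreover $Su$ is $(K,\epsilon)$-Følner for every $u\in\mathcal G^{(0)}$. *)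

theory Defs
  imports "HOL-Analysis.Analysis"
begin

text \<open>A groupoid is modelled on a whole type 'g (the arrows); the structure maps are
  source, range, (partial) multiplication and inverse. The product g h is
  defined (composable) iff src g = rng h.\<close>

record 'g groupoid_ops =
  src :: "'g \<Rightarrow> 'g"
  rng :: "'g \<Rightarrow> 'g"
  mul :: "'g \<Rightarrow> 'g \<Rightarrow> 'g"
  ginv :: "'g \<Rightarrow> 'g"

definition units :: "'g groupoid_ops \<Rightarrow> 'g set" where
  "units G = {u. rng G u = u \<and> src G u = u}"

definition algebraic_groupoid :: "'g groupoid_ops \<Rightarrow> bool" where
  "algebraic_groupoid G \<longleftrightarrow>
     (\<forall>g. src G g \<in> units G \<and> rng G g \<in> units G) \<and>
     (\<forall>g h. src G g = rng G h \<longrightarrow>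
         src G (mul G g h) = src G h \<and> rng G (mul G g h) = rng G g) \<and>
     (\<forall>g h k. src G g = rng G h \<longrightarrow> src G h = rng G k \<longrightarrow>
         mul G (mul G g h) k = mul G g (mul G h k)) \<and>
     (\<forall>g. mul G (rng G g) g = g \<and> mul G g (src G g) = g) \<and>
     (\<forall>g. src G (ginv G g) = rng G g \<and> rng G (ginv G g) = src G g \<and>
         mul G g (ginv G g) = rng G g \<and> mul G (ginv G g) g = src G g)"

definition bisection :: "'g groupoid_ops \<Rightarrow> 'g set \<Rightarrow> bool" where
  "bisection G B \<longleftrightarrow> inj_on (rng G) B \<and> inj_on (src G) B"

definition local_homeomorphism :: "('g::topological_space \<Rightarrow> 'g) \<Rightarrow> bool" where
  "local_homeomorphism f \<longleftrightarrow>
     (\<forall>g. \<exists>U. open U \<and> g \<in> U \<and> open (f ` U) \<and>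
        (\<exists>f'. homeomorphism U (f ` U) f f'))"

text \<open>Standing conventions: sigma-compact, locally compact, Hausdorff (class t2_space),
  etale, ample topological groupoid with compact unit space.\<close>
definition standing_groupoid :: "('g::t2_space) groupoid_ops \<Rightarrow> bool" where
  "standing_groupoid G \<longleftrightarrow>
     algebraic_groupoid G \<and>
     continuous_on {(g, h). src G g = rng G h} (\<lambda>(g, h). mul G g h) \<and>
     continuous_on UNIV (ginv G) \<and>
     continuous_on UNIV (src G) \<and> continuous_on UNIV (rng G) \<and>
     locally_compact_space (euclidean :: 'g topology) \<and>
     (\<exists>C :: nat \<Rightarrow> 'g set. (\<forall>n. compact (C n)) \<and> (\<Union>n. C n) = UNIV) \<and>
     local_homeomorphism (rng G) \<and>
     (\<forall>W g. open W \<longrightarrow> g \<in> W \<longrightarrow>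
        (\<exists>B. compact B \<and> open B \<and> bisection G B \<and> g \<in> B \<and> B \<subseteq> W)) \<and>
     compact (units G)"

definition principal :: "'g groupoid_ops \<Rightarrow> bool" where
  "principal G \<longleftrightarrow> (\<forall>g. src G g = rng G g \<longrightarrow> g \<in> units G)"

definition setmul :: "'g groupoid_ops \<Rightarrow> 'g set \<Rightarrow> 'g set \<Rightarrow> 'g set" where
  "setmul G A B = {mul G a b | a b. a \<in> A \<and> b \<in> B \<and> src G a = rng G b}"

definition fibre :: "'g groupoid_ops \<Rightarrow> 'g set \<Rightarrow> 'g \<Rightarrow> 'g set" where
  "fibre G A u = {a \<in> A. src G a = u}"

text \<open>(K,eps)-Foelner: finite nonempty F with |KF \ F| <= eps |F|
  (the cardinality |KF \ F| is required to be finite, as an infinite one is not <= eps|F|).\<close>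
definition foelner :: "'g groupoid_ops \<Rightarrow> 'g set \<Rightarrow> real \<Rightarrow> 'g set \<Rightarrow> bool" where
  "foelner G K eps F \<longleftrightarrow> finite F \<and> F \<noteq> {} \<and>
     finite (setmul G K F - F) \<and> real (card (setmul G K F - F)) \<le> eps * real (card F)"

definition ubiquitously_fiberwise_amenable :: "('g::topological_space) groupoid_ops \<Rightarrow> bool" where
  "ubiquitously_fiberwise_amenable G \<longleftrightarrow>
     (\<forall>K eps. compact K \<longrightarrow> eps > 0 \<longrightarrow>
        (\<exists>L. compact L \<and> (\<forall>u \<in> units G.
           \<exists>F. F \<subseteq> fibre G L u \<union> {u} \<and> foelner G K eps F)))"

definition multisection :: "'g groupoid_ops \<Rightarrow> nat set \<Rightarrow> (nat \<Rightarrow> nat \<Rightarrow> 'g set) \<Rightarrow> bool" where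
  "multisection G I C \<longleftrightarrow> finite I \<and>
     (\<forall>i\<in>I. \<forall>j\<in>I. bisection G (C i j)) \<and>
     (\<forall>i\<in>I. \<forall>j\<in>I. \<forall>k\<in>I. setmul G (C i j) (C j k) = C i k) \<and>
     (\<forall>i\<in>I. C i i \<subseteq> units G) \<and>
     (\<forall>i\<in>I. \<forall>j\<in>I. i \<noteq> j \<longrightarrow> C i i \<inter> C j j = {})"

definition compact_open_multisection ::
    "('g::topological_space) groupoid_ops \<Rightarrow> nat set \<Rightarrow> (nat \<Rightarrow> nat \<Rightarrow> 'g set) \<Rightarrow> bool" where
  "compact_open_multisection G I C \<longleftrightarrow> multisection G I C \<and>
     (\<forall>i\<in>I. \<forall>j\<in>I. compact (C i j) \<and> open (C i j))"

definition normal_set :: "('g::topological_space) groupoid_ops \<Rightarrow> 'g set \<Rightarrow> bool" where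
  "normal_set G S \<longleftrightarrow> compact S \<and> open S \<and>
     (\<exists>(m::nat) (I :: nat \<Rightarrow> nat set) (C :: nat \<Rightarrow> nat \<Rightarrow> nat \<Rightarrow> 'g set) (i0 :: nat \<Rightarrow> nat).
        (\<forall>l<m. compact_open_multisection G (I l) (C l) \<and> i0 l \<in> I l) \<and>
        S = (\<Union>l<m. \<Union>i\<in>I l. C l i (i0 l)) \<and>
        (\<forall>l<m. \<forall>l'<m. \<forall>i\<in>I l. \<forall>i'\<in>I l'. (l, i) \<noteq> (l', i') \<longrightarrow>
            C l i (i0 l) \<inter> C l' i' (i0 l') = {}) \<and>
        units G = (\<Union>l<m. C l (i0 l) (i0 l)) \<and>
        (\<forall>l<m. \<forall>l'<m. l \<noteq> l' \<longrightarrow> C l (i0 l) (i0 l) \<inter> C l' (i0 l') (i0 l') = {}))"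

definition normal_foelner_set ::
    "('g::topological_space) groupoid_ops \<Rightarrow> 'g set \<Rightarrow> real \<Rightarrow> 'g set \<Rightarrow> bool" where
  "normal_foelner_set G K eps S \<longleftrightarrow> normal_set G S \<and>
     (\<forall>u \<in> units G. foelner G K eps (fibre G S u))"

end

theory Submission
  imports Defs
begin

locale SG =
  fixes G :: "('g::t2_space) groupoid_ops"
  assumes sg: "standing_groupoid G"
begin

abbreviation "s \<equiv> src G"
abbreviation "r \<equiv> rng G"
abbreviation "mm \<equiv> mul G"
abbreviation "iv \<equiv> ginv G"
abbreviation "U0 \<equiv> units G"

lemma alg: "algebraic_groupoid G" using sg standing_groupoid_def by blast

lemma s_unit[simp]: "s g \<in> U0" and r_unit[simp]: "r g \<in> U0"
  using alg unfolding algebraic_groupoid_def by auto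

lemma unit_s: "u \<in> U0 \<Longrightarrow> s u = u" and unit_r: "u \<in> U0 \<Longrightarrow> r u = u"
  by (auto simp: units_def)

lemma s_s[simp]: "s (s g) = s g" and r_s[simp]: "r (s g) = s g"
  and s_r[simp]: "s (r g) = r g" and r_r[simp]: "r (r g) = r g"
  using unit_s unit_r s_unit r_unit by auto

lemma s_mul[simp]: "s g = r h \<Longrightarrow> s (mm g h) = s h"
  and r_mul[simp]: "s g = r h \<Longrightarrow> r (mm g h) = r g"
  using alg unfolding algebraic_groupoid_def by auto

lemma assoc: "s g = r h \<Longrightarrow> s h = r k \<Longrightarrow> mm (mm g h) k = mm g (mm h k)"
  using alg unfolding algebraic_groupoid_def by auto

lemma mul_r[simp]: "mm (r g) g = g" and mul_s[simp]: "mm g (s g) = g"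
  using alg unfolding algebraic_groupoid_def by auto

lemma s_iv[simp]: "s (iv g) = r g" and r_iv[simp]: "r (iv g) = s g"
  and mul_iv[simp]: "mm g (iv g) = r g" and iv_mul[simp]: "mm (iv g) g = s g"
  using alg unfolding algebraic_groupoid_def by auto

lemma iv_iv[simp]: "iv (iv g) = g"
proof -
  have "iv (iv g) = mm (iv (iv g)) (s g)" using mul_s[of "iv (iv g)"] by simp
  also have "\<dots> = mm (iv (iv g)) (mm (iv g) g)" by simp
  also have "\<dots> = mm (mm (iv (iv g)) (iv g)) g" using assoc[of "iv (iv g)" "iv g" g] by simp
  also have "\<dots> = g" by simp
  finally show ?thesis .
qed

lemma unit_mul_l: "u \<in> U0 \<Longrightarrow> r g = u \<Longrightarrow> mm u g = g"
  using mul_r by blast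
lemma unit_mul_r: "u \<in> U0 \<Longrightarrow> s g = u \<Longrightarrow> mm g u = g"
  using mul_s by blast

lemma iv_unit: assumes "u \<in> U0" shows "iv u = u"
proof -
  have "iv u = mm (iv u) (s (iv u))" by (rule mul_s[symmetric])
  also have "\<dots> = mm (iv u) u" using assms unit_r by simp
  also have "\<dots> = u" using assms unit_s by simp
  finally show ?thesis .
qed

lemma cancel_r: assumes "s a = r g" "s b = r g" "mm a g = mm b g" shows "a = b"
proof -
  have "mm a (r g) = a" using mul_s[of a] assms(1) by simp
  hence "a = mm (mm a g) (iv g)" using assms(1) by (simp add: assoc)
  have "mm b (r g) = b" using mul_s[of b] assms(2) by simp
  moreover have "a = mm (mm a g) (iv g)" using assms(1) \<open>mm a (r g) = a\<close> by (simp add: assoc)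
  moreover have "b = mm (mm b g) (iv g)" using assms(2) \<open>mm b (r g) = b\<close> by (simp add: assoc)
  ultimately show ?thesis using assms(3) by simp
qed

lemma cancel_l: assumes "s g = r a" "s g = r b" "mm g a = mm g b" shows "a = b"
proof -
  have "a = mm (iv g) (mm g a)" using assms(1) by (simp add: assoc[symmetric])
  moreover have "b = mm (iv g) (mm g b)" using assms(2) by (simp add: assoc[symmetric])
  ultimately show ?thesis using assms(3) by simp
qed

end


context SG begin

lemma cont_mul: "continuous_on {(g, h). s g = r h} (\<lambda>(g, h). mm g h)"
  and cont_iv: "continuous_on UNIV iv" and cont_s: "continuous_on UNIV s"
  and cont_r: "continuous_on UNIV r"
  and lochom: "local_homeomorphism r"
  and ample: "\<And>W g. open W \<Longrightarrow> g \<in> W \<Longrightarrow> \<exists>B. compact B \<and> open B \<and> bisection G B \<and> g \<in> B \<and> B \<subseteq> W"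
  and compact_U0: "compact U0"
  using sg unfolding standing_groupoid_def by auto

lemma open_pre: "continuous_on UNIV f \<Longrightarrow> open A \<Longrightarrow> open (f -` A)"
  using continuous_on_open_vimage[of UNIV f] by auto

lemma closed_pre: "continuous_on UNIV f \<Longrightarrow> closed A \<Longrightarrow> closed (f -` A)"
  using continuous_on_closed_vimage[of UNIV f] by auto

lemma iv_image: "iv ` A = iv -` A"
  by (auto simp: image_iff) (metis iv_iv)

lemma open_iv: "open A \<Longrightarrow> open (iv ` A)"
  using open_pre[OF cont_iv] iv_image by simp

lemma compact_iv: "compact A \<Longrightarrow> compact (iv ` A)"
  using compact_continuous_image continuous_on_subset cont_iv by blast

lemma open_r: assumes "open A" shows "open (r ` A)"
proof -
  have "\<forall>g\<in>A. \<exists>V. open V \<and> r g \<in> V \<and> V \<subseteq> r ` A"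
  proof
    fix g assume g: "g \<in> A"
    obtain U f' where U: "open U" "g \<in> U" "open (r ` U)" "homeomorphism U (r ` U) r f'"
      using lochom unfolding local_homeomorphism_def by blast
    have "openin (top_of_set U) (A \<inter> U)" using openin_open_Int[OF assms, of U]
      by (simp add: Int_commute)
    hence "openin (top_of_set (r ` U)) (r ` (A \<inter> U))"
      using homeomorphism_imp_open_map[OF U(4)] by blast
    hence "open (r ` (A \<inter> U))" using U(3) openin_open_trans by blast
    thus "\<exists>V. open V \<and> r g \<in> V \<and> V \<subseteq> r ` A" using g U(2) by blast
  qed
  thus ?thesis by (metis (no_types, lifting) imageE open_subopen)
qed

lemma s_eq: "s g = r (iv g)" by simp

lemma s_image: "s ` A = r ` (iv ` A)"
  by (simp add: image_image)

lemma open_s: "open A \<Longrightarrow> open (s ` A)"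
  using s_image open_r open_iv by metis

lemma open_U0: "open U0"
proof -
  have "\<forall>u\<in>U0. \<exists>V. open V \<and> u \<in> V \<and> V \<subseteq> U0"
  proof
    fix u assume u: "u \<in> U0"
    obtain U f' where U: "open U" "u \<in> U" "homeomorphism U (r ` U) r f'"
      using lochom unfolding local_homeomorphism_def by blast
    have inj: "inj_on r U" using U(3) by (metis homeomorphism_def inj_on_inverseI)
    define V where "V = U \<inter> r -` U"
    have "open V" unfolding V_def using U(1) open_pre[OF cont_r] by blast
    moreover have "u \<in> V" unfolding V_def using U(2) u unit_r by auto
    moreover have "V \<subseteq> U0"
    proof
      fix g assume "g \<in> V"
      hence "g \<in> U" "r g \<in> U" unfolding V_def by auto
      moreover have "r (r g) = r g" by simp
      ultimately have "r g = g" using inj by (meson inj_onD)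
      thus "g \<in> U0" by (metis r_unit)
    qed
    ultimately show "\<exists>V. open V \<and> u \<in> V \<and> V \<subseteq> U0" by blast
  qed
  thus ?thesis by (meson open_subopen)
qed

lemma compact_closed: "compact (A::'g set) \<Longrightarrow> closed A" by (rule compact_imp_closed)

lemma finite_fibre: assumes "compact T" shows "finite (fibre G T x)"
proof -
  have eq: "fibre G T x = T \<inter> s -` {x}" unfolding fibre_def by auto
  have cT: "compact (fibre G T x)" unfolding eq
    using assms closed_pre[OF cont_s, of "{x}"] by (simp add: compact_Int_closed)
  have "\<forall>t. \<exists>Ob. open Ob \<and> t \<in> Ob \<and> bisection G Ob" using ample[of UNIV] by blast
  then obtain Ob where Ob: "\<And>t. open (Ob t) \<and> t \<in> Ob t \<and> bisection G (Ob t)" by metis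
  have "fibre G T x \<subseteq> (\<Union>t\<in>fibre G T x. Ob t)" using Ob by blast
  then obtain C where C: "C \<subseteq> fibre G T x" "finite C" "fibre G T x \<subseteq> (\<Union>t\<in>C. Ob t)"
    using compactE_image[OF cT, of "fibre G T x" Ob] Ob by blast
  have "fibre G T x \<subseteq> C"
  proof
    fix y assume y: "y \<in> fibre G T x"
    then obtain t where t: "t \<in> C" "y \<in> Ob t" using C(3) by blast
    have "t \<in> fibre G T x" using C(1) t(1) by blast
    hence "s t = s y" using y unfolding fibre_def by simp
    moreover have "inj_on s (Ob t)" using Ob bisection_def by blast
    ultimately have "t = y" using Ob t(2) by (meson inj_onD)
    thus "y \<in> C" using t by simp
  qed
  thus ?thesis using C(2) finite_subset by blast
qed

end


context SG begin

lemma closed_comp: "closed {p::'g\<times>'g. s (fst p) = r (snd p)}"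
  by (intro closed_Collect_eq continuous_on_compose2[OF cont_s] continuous_on_compose2[OF cont_r]
      continuous_intros) auto

lemma setmul_eq: "setmul G A B = (\<lambda>(g, h). mm g h) ` ((A \<times> B) \<inter> {p. s (fst p) = r (snd p)})"
  unfolding setmul_def by force

lemma compact_setmul: assumes "compact A" "compact B" shows "compact (setmul G A B)"
proof -
  have "compact ((A \<times> B) \<inter> {p. s (fst p) = r (snd p)})"
    using compact_Times[OF assms] closed_comp by (rule compact_Int_closed)
  moreover have "continuous_on ((A \<times> B) \<inter> {p. s (fst p) = r (snd p)}) (\<lambda>(g, h). mm g h)"
    by (rule continuous_on_subset[OF cont_mul]) auto
  ultimately show ?thesis unfolding setmul_eq by (blast intro: compact_continuous_image)
qed

lemma open_setmul: assumes oA: "open A" and oB: "open B" shows "open (setmul G A B)"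
proof -
  have "\<forall>c\<in>setmul G A B. \<exists>N. open N \<and> c \<in> N \<and> N \<subseteq> setmul G A B"
  proof
    fix c assume "c \<in> setmul G A B"
    then obtain a b where ab: "a \<in> A" "b \<in> B" "s a = r b" "c = mm a b"
      unfolding setmul_def by blast
    obtain P where P: "compact P" "open P" "bisection G P" "b \<in> P" "P \<subseteq> B"
      using ample[OF oB ab(2)] by blast
    have injP: "inj_on s P" using P(3) bisection_def by blast
    define \<tau> where "\<tau> = inv_into P s"
    have tau1: "\<And>x. x \<in> P \<Longrightarrow> \<tau> (s x) = x" unfolding \<tau>_def using injP by simp
    have tau2: "\<And>y. y \<in> s ` P \<Longrightarrow> \<tau> y \<in> P \<and> s (\<tau> y) = y"
      unfolding \<tau>_def by (simp add: inv_into_into f_inv_into_f)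
    have ctau: "continuous_on (s ` P) \<tau>"
    proof (rule continuous_on_inverse_open_map[where f = s])
      show "continuous_on P s" using cont_s continuous_on_subset by blast
      show "s ` P = s ` P" ..
      show "\<And>x. x \<in> P \<Longrightarrow> \<tau> (s x) = x" by (rule tau1)
      fix U assume "openin (top_of_set P) U"
      hence "open U" "U \<subseteq> P" using P(2) openin_open_trans openin_imp_subset by blast+
      hence "open (s ` U)" "s ` U \<subseteq> s ` P" using open_s by auto
      thus "openin (top_of_set (s ` P)) (s ` U)"
        by (metis inf.absorb_iff2 openin_open_Int)
    qed
    define Dom where "Dom = s -` (s ` P)"
    have oDom: "open Dom" unfolding Dom_def using open_pre[OF cont_s open_s[OF P(2)]] .
    define \<phi> where "\<phi> = (\<lambda>c'. mm c' (iv (\<tau> (s c'))))"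
    have cin: "continuous_on Dom (\<lambda>c'. (c', iv (\<tau> (s c'))))"
    proof (intro continuous_on_Pair continuous_on_id)
      have "continuous_on Dom (\<lambda>c'. \<tau> (s c'))"
        by (rule continuous_on_compose2[OF ctau continuous_on_subset[OF cont_s]]) (auto simp: Dom_def)
      thus "continuous_on Dom (\<lambda>c'. iv (\<tau> (s c')))"
        by (rule continuous_on_compose2[OF cont_iv]) auto
    qed
    have "continuous_on Dom ((\<lambda>(g, h). mm g h) \<circ> (\<lambda>c'. (c', iv (\<tau> (s c')))))"
      by (rule continuous_on_compose[OF cin], rule continuous_on_subset[OF cont_mul])
        (auto simp: Dom_def tau2)
    hence cphi: "continuous_on Dom \<phi>" unfolding \<phi>_def by (simp add: o_def)
    define N where "N = Dom \<inter> \<phi> -` A"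
    have "open N" unfolding N_def using cphi oDom oA continuous_on_open_vimage by (metis Int_commute)
    moreover have "c \<in> N"
    proof -
      have sc: "s c = s b" using ab by simp
      hence cD: "c \<in> Dom" unfolding Dom_def using P(4) by auto
      have "\<tau> (s c) = b" using sc tau1 P(4) by simp
      hence "\<phi> c = mm (mm a b) (iv b)" unfolding \<phi>_def using ab by simp
      also have "\<dots> = mm a (r b)" using assoc[of a b "iv b"] ab by simp
      also have "\<dots> = a" using mul_s[of a] ab by simp
      finally show ?thesis unfolding N_def using ab(1) cD by simp
    qed
    moreover have "N \<subseteq> setmul G A B"
    proof
      fix c' assume c': "c' \<in> N"
      define b' where "b' = \<tau> (s c')"
      have b': "b' \<in> P" "s b' = s c'" using c' tau2 unfolding N_def Dom_def b'_def by auto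
      have a': "\<phi> c' \<in> A" using c' unfolding N_def by simp
      have e: "\<phi> c' = mm c' (iv b')" unfolding \<phi>_def b'_def ..
      have sa: "s (\<phi> c') = r b'" using e b' by simp
      have "mm (\<phi> c') b' = mm c' (mm (iv b') b')" using e assoc[of c' "iv b'" b'] b' by simp
      also have "\<dots> = c'" using b' by simp
      finally have "c' = mm (\<phi> c') b'" by simp
      thus "c' \<in> setmul G A B" unfolding setmul_def using a' b'(1) P(5) sa by blast
    qed
    ultimately show "\<exists>N. open N \<and> c \<in> N \<and> N \<subseteq> setmul G A B" by blast
  qed
  thus ?thesis by (meson open_subopen)
qed

lemma usc: assumes cT: "compact T"
  shows "\<exists>V. open V \<and> u \<in> V \<and> (\<forall>v\<in>V. card (fibre G T v) \<le> card (fibre G T u))"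
proof -
  define E where "E = fibre G T u"
  have fE: "finite E" unfolding E_def using finite_fibre[OF cT] .
  have "\<forall>t. \<exists>Ob. open Ob \<and> t \<in> Ob \<and> bisection G Ob" using ample[of UNIV] by blast
  then obtain Ob where Ob: "\<And>t. open (Ob t) \<and> t \<in> Ob t \<and> bisection G (Ob t)" by metis
  define R where "R = T - (\<Union>e\<in>E. Ob e)"
  have "compact R" unfolding R_def using cT Ob by (intro compact_diff) auto
  hence "compact (s ` R)" using compact_continuous_image continuous_on_subset cont_s by blast
  hence cl: "closed (s ` R)" by (rule compact_imp_closed)
  define V where "V = - (s ` R)"
  have "open V" unfolding V_def using cl by auto
  moreover have "u \<notin> s ` R"
  proof
    assume "u \<in> s ` R"
    then obtain y where "y \<in> R" "s y = u" by auto
    hence "y \<in> E" unfolding R_def E_def fibre_def by auto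
    thus False using \<open>y \<in> R\<close> Ob unfolding R_def by auto
  qed
  moreover have "\<forall>v\<in>V. card (fibre G T v) \<le> card E"
  proof
    fix v assume v: "v \<in> V"
    have fv: "finite (fibre G T v)" using finite_fibre[OF cT] .
    have eq: "fibre G T v = (\<Union>e\<in>E. fibre G T v \<inter> Ob e)"
    proof (rule set_eqI, rule iffI)
      fix y assume y: "y \<in> fibre G T v"
      have "y \<notin> R" using v y unfolding V_def fibre_def by auto
      thus "y \<in> (\<Union>e\<in>E. fibre G T v \<inter> Ob e)" using y unfolding R_def fibre_def by auto
    qed auto
    have le1: "card (fibre G T v \<inter> Ob e) \<le> 1" for e
    proof -
      have "finite (fibre G T v \<inter> Ob e)" using fv by simp
      moreover have "\<forall>a1\<in>fibre G T v \<inter> Ob e. \<forall>a2\<in>fibre G T v \<inter> Ob e. a1 = a2"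
        using Ob[of e] unfolding bisection_def fibre_def by (auto dest: inj_onD)
      ultimately show ?thesis using card_le_Suc0_iff_eq by auto
    qed
    have "card (fibre G T v) \<le> (\<Sum>e\<in>E. card (fibre G T v \<inter> Ob e))"
      by (subst eq) (rule card_UN_le[OF fE])
    also have "\<dots> \<le> (\<Sum>e\<in>E. 1)" by (rule sum_mono) (rule le1)
    also have "\<dots> = card E" by simp
    finally show "card (fibre G T v) \<le> card E" .
  qed
  ultimately show ?thesis unfolding E_def V_def by blast
qed

end


context SG begin

lemma foelner_union:
  assumes "foelner G K e A" "foelner G K e B" "A \<inter> B = {}"
  shows "foelner G K e (A \<union> B)"
proof -
  have sub: "setmul G K (A \<union> B) - (A \<union> B) \<subseteq> (setmul G K A - A) \<union> (setmul G K B - B)"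
    unfolding setmul_def by blast
  have fA: "finite (setmul G K A - A)" and fB: "finite (setmul G K B - B)"
    using assms unfolding foelner_def by auto
  have f: "finite (setmul G K (A \<union> B) - (A \<union> B))" using sub fA fB finite_subset by blast
  have "card (setmul G K (A \<union> B) - (A \<union> B)) \<le> card ((setmul G K A - A) \<union> (setmul G K B - B))"
    using sub fA fB by (simp add: card_mono)
  also have "\<dots> \<le> card (setmul G K A - A) + card (setmul G K B - B)" by (rule card_Un_le)
  finally have c: "real (card (setmul G K (A \<union> B) - (A \<union> B))) \<le>
      real (card (setmul G K A - A)) + real (card (setmul G K B - B))" by linarith
  have "card (A \<union> B) = card A + card B" using assms unfolding foelner_def
    by (simp add: card_Un_disjoint)
  hence "e * real (card (A \<union> B)) = e * real (card A) + e * real (card B)"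
    by (simp add: distrib_left)
  thus ?thesis using c assms f unfolding foelner_def by auto
qed

lemma foelner_translate:
  assumes F: "\<forall>f\<in>F. s f = r g" and fo: "foelner G K e F"
  shows "foelner G K e (setmul G F {g})" and "\<forall>a\<in>setmul G F {g}. s a = s g"
proof -
  define \<rho> where "\<rho> = (\<lambda>h. mm h g)"
  have inj: "inj_on \<rho> {h. s h = r g}" unfolding \<rho>_def inj_on_def using cancel_r by blast
  have e1: "setmul G F {g} = \<rho> ` F" unfolding setmul_def \<rho>_def using F by auto
  have sK: "\<forall>x\<in>setmul G K F. s x = r g" unfolding setmul_def using F by auto
  have e2: "setmul G K (\<rho> ` F) = \<rho> ` setmul G K F"
  proof
    show "setmul G K (\<rho> ` F) \<subseteq> \<rho> ` setmul G K F"
    proof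
      fix x assume "x \<in> setmul G K (\<rho> ` F)"
      then obtain k f where kf: "k \<in> K" "f \<in> F" "s k = r (mm f g)" "x = mm k (mm f g)"
        unfolding setmul_def \<rho>_def by blast
      have "s k = r f" using kf F by simp
      hence "x = mm (mm k f) g" using kf F assoc[of k f g] by simp
      moreover have "mm k f \<in> setmul G K F" using kf \<open>s k = r f\<close> unfolding setmul_def by blast
      ultimately show "x \<in> \<rho> ` setmul G K F" unfolding \<rho>_def by blast
    qed
    show "\<rho> ` setmul G K F \<subseteq> setmul G K (\<rho> ` F)"
    proof
      fix x assume "x \<in> \<rho> ` setmul G K F"
      then obtain k f where kf: "k \<in> K" "f \<in> F" "s k = r f" "x = mm (mm k f) g"
        unfolding setmul_def \<rho>_def by blast
      have "x = mm k (mm f g)" using kf F assoc[of k f g] by simp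
      moreover have "s k = r (mm f g)" using kf F by simp
      ultimately show "x \<in> setmul G K (\<rho> ` F)" using kf unfolding setmul_def \<rho>_def by blast
    qed
  qed
  have sub1: "F \<subseteq> {h. s h = r g}" using F by auto
  have sub2: "setmul G K F \<subseteq> {h. s h = r g}" using sK by auto
  have e3: "setmul G K (\<rho> ` F) - \<rho> ` F = \<rho> ` (setmul G K F - F)"
    unfolding e2 using inj_on_image_set_diff[OF inj, of "setmul G K F" F] sub1 sub2 by auto
  have c1: "card (\<rho> ` F) = card F" using inj sub1 card_image inj_on_subset by blast
  have c2: "card (\<rho> ` (setmul G K F - F)) = card (setmul G K F - F)"
    using inj sub2 card_image inj_on_subset by (metis Diff_subset subset_trans)
  show "foelner G K e (setmul G F {g})" using fo unfolding foelner_def e1 e3 c1 c2 by auto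
  show "\<forall>a\<in>setmul G F {g}. s a = s g" unfolding setmul_def using F by auto
qed

lemma finite_rfibre: assumes "compact L" shows "finite {l \<in> L. r l = y}"
proof -
  have "{l \<in> L. r l = y} \<subseteq> iv ` fibre G (iv ` L) y"
  proof
    fix l assume l: "l \<in> {l \<in> L. r l = y}"
    hence "iv l \<in> fibre G (iv ` L) y" unfolding fibre_def by auto
    moreover have "l = iv (iv l)" by simp
    ultimately show "l \<in> iv ` fibre G (iv ` L) y" by blast
  qed
  thus ?thesis using finite_fibre[OF compact_iv[OF assms]] finite_subset by blast
qed

lemma avoid:
  assumes ufa: "ubiquitously_fiberwise_amenable G" and K: "compact K" and e: "e > 0"
    and inf: "infinite {g. s g = u}" and D: "finite D"
  shows "\<exists>A. A \<subseteq> {g. s g = u} \<and> A \<inter> D = {} \<and> foelner G K e A"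
proof -
  obtain L where L: "compact L" "\<forall>x\<in>U0. \<exists>F. F \<subseteq> fibre G L x \<union> {x} \<and> foelner G K e F"
    using ufa K e unfolding ubiquitously_fiberwise_amenable_def by (elim allE[of _ K] allE[of _ e]) (simp only: imp_conjL[symmetric], iprover)
  define Bd where "Bd = D \<union> (\<Union>h\<in>D. (\<lambda>l. mm (iv l) h) ` {l \<in> L. r l = r h})"
  have "finite Bd" unfolding Bd_def using D finite_rfibre[OF L(1)] by auto
  hence "infinite ({g. s g = u} - Bd)" using inf by (simp add: Diff_infinite_finite)
  then obtain g where "g \<in> {g. s g = u} - Bd" using infinite_imp_nonempty by blast
  hence g: "s g = u" "g \<notin> Bd" by auto
  have "r g \<in> U0" by simp
  then obtain F where F: "F \<subseteq> fibre G L (r g) \<union> {r g}" "foelner G K e F" using L(2) by blast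
  have Fs: "\<forall>f\<in>F. s f = r g" using F(1) unfolding fibre_def by auto
  define A where "A = setmul G F {g}"
  have "foelner G K e A" "\<forall>a\<in>A. s a = s g" unfolding A_def using foelner_translate[OF Fs F(2)] by auto
  moreover have "A \<inter> D = {}"
  proof (rule ccontr)
    assume "A \<inter> D \<noteq> {}"
    then obtain f where f: "f \<in> F" "mm f g \<in> D" unfolding A_def setmul_def by auto
    show False
    proof (cases "f = r g")
      case True
      hence "g \<in> D" using f by simp
      thus False using g unfolding Bd_def by blast
    next
      case False
      hence fL: "f \<in> L" "s f = r g" using f F(1) unfolding fibre_def by auto
      define h where "h = mm f g"
      have rh: "r f = r h" unfolding h_def using fL by simp
      have "mm (iv f) h = mm (mm (iv f) f) g" unfolding h_def using fL assoc[of "iv f" f g] by simp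
      also have "\<dots> = g" using fL by simp
      finally have gh: "g = mm (iv f) h" by simp
      have "f \<in> {l \<in> L. r l = r h}" using fL rh by simp
      hence "g \<in> (\<lambda>l. mm (iv l) h) ` {l \<in> L. r l = r h}" using gh by blast
      thus False using g f unfolding Bd_def h_def by blast
    qed
  qed
  ultimately show ?thesis using g by auto
qed

lemma big_foelner:
  assumes ufa: "ubiquitously_fiberwise_amenable G" and K: "compact K" and e: "e > 0"
    and inf: "infinite {g. s g = u}"
  shows "\<exists>A. A \<subseteq> {g. s g = u} \<and> foelner G K e A \<and> card A \<ge> n"
proof (induction n)
  case 0
  then show ?case using avoid[OF ufa K e inf, of "{}"] by auto
next
  case (Suc n)
  then obtain A where A: "A \<subseteq> {g. s g = u}" "foelner G K e A" "card A \<ge> n" by blast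
  have fA: "finite A" using A(2) unfolding foelner_def by simp
  obtain B where B: "B \<subseteq> {g. s g = u}" "B \<inter> A = {}" "foelner G K e B"
    using avoid[OF ufa K e inf fA] by blast
  have "B \<noteq> {}" "finite B" using B(3) unfolding foelner_def by auto
  hence "card B > 0" by auto
  moreover have "card (A \<union> B) = card A + card B" using fA \<open>finite B\<close> B(2)
    by (simp add: card_Un_disjoint inf_commute)
  ultimately have "card (A \<union> B) \<ge> Suc n" using A(3) by linarith
  moreover have "foelner G K e (A \<union> B)" using foelner_union[OF A(2) B(3)] B(2) by blast
  ultimately show ?case using A(1) B(1) by blast
qed

end


context SG begin

lemma foelner_at_unit:
  assumes ufa: "ubiquitously_fiberwise_amenable G" and K: "compact K" and e: "eps > 0"
    and u: "u \<in> U0"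
  shows "\<exists>F. (\<forall>f\<in>F. s f = u) \<and> u \<in> F \<and> foelner G K eps F"
proof (cases "finite {g. s g = u}")
  case True
  define F where "F = {g. s g = u}"
  have uF: "u \<in> F" unfolding F_def using u unit_s by simp
  have "setmul G K F \<subseteq> F" unfolding setmul_def F_def by auto
  hence em: "setmul G K F - F = {}" by blast
  have "finite F" "F \<noteq> {}" using True uF unfolding F_def by auto
  hence "foelner G K eps F" unfolding foelner_def em using e by simp
  thus ?thesis using uF unfolding F_def by auto
next
  case False
  define N where "N = card (fibre G K u)"
  define n where "n = nat (ceiling (2 * real N / eps))"
  have e2: "eps / 2 > 0" using e by simp
  obtain A where A: "A \<subseteq> {g. s g = u}" "foelner G K (eps / 2) A" "card A \<ge> n"
    using big_foelner[OF ufa K e2 False] by blast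
  have fA: "finite A" "A \<noteq> {}" and fdA: "finite (setmul G K A - A)"
    and cdA: "real (card (setmul G K A - A)) \<le> eps / 2 * real (card A)"
    using A(2) unfolding foelner_def by auto
  define F where "F = A \<union> {u}"
  have sub: "setmul G K F - F \<subseteq> (setmul G K A - A) \<union> fibre G K u"
  proof
    fix x assume x: "x \<in> setmul G K F - F"
    then obtain k f where kf: "k \<in> K" "f \<in> F" "s k = r f" "x = mm k f" unfolding setmul_def by blast
    show "x \<in> (setmul G K A - A) \<union> fibre G K u"
    proof (cases "f = u")
      case True
      hence "x = k" "s k = u" using kf u unit_r by auto
      thus ?thesis using kf unfolding fibre_def by auto
    next
      case False
      hence "f \<in> A" using kf unfolding F_def by auto
      hence "x \<in> setmul G K A" using kf unfolding setmul_def by blast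
      thus ?thesis using x unfolding F_def by auto
    qed
  qed
  have fK: "finite (fibre G K u)" using finite_fibre[OF K] .
  have fin: "finite (setmul G K F - F)" using sub fdA fK finite_subset by blast
  have "card (setmul G K F - F) \<le> card ((setmul G K A - A) \<union> fibre G K u)"
    using sub fdA fK by (simp add: card_mono)
  also have "\<dots> \<le> card (setmul G K A - A) + N" unfolding N_def by (rule card_Un_le)
  finally have c1: "real (card (setmul G K F - F)) \<le> eps / 2 * real (card A) + real N"
    using cdA by linarith
  have "real n \<ge> 2 * real N / eps" unfolding n_def by (rule real_nat_ceiling_ge)
  hence ca: "real (card A) \<ge> 2 * real N / eps" using A(3) by linarith
  have "eps * (2 * real N / eps) = 2 * real N" using e by simp
  moreover have "eps * (2 * real N / eps) \<le> eps * real (card A)"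
    using ca e by (intro mult_left_mono) auto
  ultimately have c2: "real N \<le> eps / 2 * real (card A)" by linarith
  have "card A \<le> card F" unfolding F_def using fA by (intro card_mono) auto
  hence c3: "eps * real (card A) \<le> eps * real (card F)" using e by simp
  have "real (card (setmul G K F - F)) \<le> eps * real (card F)" using c1 c2 c3 by linarith
  moreover have "finite F" "F \<noteq> {}" unfolding F_def using fA by auto
  ultimately have "foelner G K eps F" unfolding foelner_def using fin by auto
  moreover have "\<forall>f\<in>F. s f = u" unfolding F_def using A(1) u unit_s by auto
  moreover have "u \<in> F" unfolding F_def by simp
  ultimately show ?thesis by blast
qed

end


context SG begin

lemma ms_alg:
  assumes bis: "\<forall>i\<in>I. bisection G (D i)"
    and sur: "\<forall>i\<in>I. \<forall>w\<in>W. \<exists>d\<in>D i. s d = w"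
    and sW: "\<forall>i\<in>I. s ` D i \<subseteq> W"
    and disj: "\<forall>i\<in>I. \<forall>j\<in>I. i \<noteq> j \<longrightarrow> r ` D i \<inter> r ` D j = {}"
    and fin: "finite I"
  shows "multisection G I (\<lambda>i j. setmul G (D i) (iv ` D j))"
proof -
  have injr: "\<And>i a b. i \<in> I \<Longrightarrow> a \<in> D i \<Longrightarrow> b \<in> D i \<Longrightarrow> r a = r b \<Longrightarrow> a = b"
    using bis unfolding bisection_def by (meson inj_onD)
  have injs: "\<And>i a b. i \<in> I \<Longrightarrow> a \<in> D i \<Longrightarrow> b \<in> D i \<Longrightarrow> s a = s b \<Longrightarrow> a = b"
    using bis unfolding bisection_def by (meson inj_onD)
  have memC: "x \<in> setmul G (D i) (iv ` D j) \<longleftrightarrow> (\<exists>a b. a \<in> D i \<and> b \<in> D j \<and> s a = s b \<and> x = mm a (iv b))"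
    for x i j unfolding setmul_def by (auto simp: image_iff; metis r_iv)
  have b1: "bisection G (setmul G (D i) (iv ` D j))" if ij: "i \<in> I" "j \<in> I" for i j
    unfolding bisection_def
  proof
    show "inj_on r (setmul G (D i) (iv ` D j))"
    proof (rule inj_onI)
      fix x y assume x: "x \<in> setmul G (D i) (iv ` D j)" and y: "y \<in> setmul G (D i) (iv ` D j)"
        and e: "r x = r y"
      obtain a b where ab: "a \<in> D i" "b \<in> D j" "s a = s b" "x = mm a (iv b)" using x memC by blast
      obtain a' b' where ab': "a' \<in> D i" "b' \<in> D j" "s a' = s b'" "y = mm a' (iv b')" using y memC by blast
      have "r a = r a'" using e ab ab' by simp
      hence "a = a'" using injr ij ab ab' by blast
      hence "b = b'" using injs ij ab ab' by metis
      thus "x = y" using ab ab' \<open>a = a'\<close> by simp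
    qed
    show "inj_on s (setmul G (D i) (iv ` D j))"
    proof (rule inj_onI)
      fix x y assume x: "x \<in> setmul G (D i) (iv ` D j)" and y: "y \<in> setmul G (D i) (iv ` D j)"
        and e: "s x = s y"
      obtain a b where ab: "a \<in> D i" "b \<in> D j" "s a = s b" "x = mm a (iv b)" using x memC by blast
      obtain a' b' where ab': "a' \<in> D i" "b' \<in> D j" "s a' = s b'" "y = mm a' (iv b')" using y memC by blast
      have "r b = r b'" using e ab ab' by simp
      hence "b = b'" using injr ij ab ab' by blast
      hence "a = a'" using injs ij ab ab' by metis
      thus "x = y" using ab ab' \<open>b = b'\<close> by simp
    qed
  qed
  have key: "mm (mm a (iv b)) (mm b (iv c)) = mm a (iv c)" if "s a = s b" "s b = s c" for a b c
  proof -
    have "mm (mm a (iv b)) (mm b (iv c)) = mm a (mm (iv b) (mm b (iv c)))"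
      using assoc[of a "iv b" "mm b (iv c)"] that by simp
    also have "mm (iv b) (mm b (iv c)) = mm (mm (iv b) b) (iv c)"
      using assoc[of "iv b" b "iv c"] that by simp
    also have "\<dots> = iv c" using that mul_r[of "iv c"] by simp
    finally show ?thesis .
  qed
  have b2: "setmul G (setmul G (D i) (iv ` D j)) (setmul G (D j) (iv ` D k)) = setmul G (D i) (iv ` D k)"
    if ijk: "i \<in> I" "j \<in> I" "k \<in> I" for i j k
  proof (rule set_eqI, rule iffI)
    fix x assume "x \<in> setmul G (setmul G (D i) (iv ` D j)) (setmul G (D j) (iv ` D k))"
    then obtain y z where yz: "y \<in> setmul G (D i) (iv ` D j)" "z \<in> setmul G (D j) (iv ` D k)"
      "s y = r z" "x = mm y z" unfolding setmul_def by blast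
    obtain a b where ab: "a \<in> D i" "b \<in> D j" "s a = s b" "y = mm a (iv b)" using yz(1) memC by blast
    obtain b' c where bc: "b' \<in> D j" "c \<in> D k" "s b' = s c" "z = mm b' (iv c)" using yz(2) memC by blast
    have "r b = r b'" using yz(3) ab bc by simp
    hence "b = b'" using injr ijk ab bc by blast
    hence "x = mm a (iv c)" using key[of a b c] ab bc yz by simp
    moreover have "s a = s c" using ab bc \<open>b = b'\<close> by simp
    ultimately show "x \<in> setmul G (D i) (iv ` D k)" using memC ab bc by blast
  next
    fix x assume "x \<in> setmul G (D i) (iv ` D k)"
    then obtain a c where ac: "a \<in> D i" "c \<in> D k" "s a = s c" "x = mm a (iv c)" using memC by blast
    have "s a \<in> W" using sW ac ijk by blast
    then obtain b where b: "b \<in> D j" "s b = s a" using sur ijk by metis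
    have "x = mm (mm a (iv b)) (mm b (iv c))" using key[of a b c] ac b by simp
    moreover have "mm a (iv b) \<in> setmul G (D i) (iv ` D j)" using memC ac b by metis
    moreover have "mm b (iv c) \<in> setmul G (D j) (iv ` D k)" using memC ac b by metis
    moreover have "s (mm a (iv b)) = r (mm b (iv c))" using ac b by simp
    ultimately show "x \<in> setmul G (setmul G (D i) (iv ` D j)) (setmul G (D j) (iv ` D k))"
      unfolding setmul_def by blast
  qed
  have Cii: "setmul G (D i) (iv ` D i) = r ` D i" if "i \<in> I" for i
  proof (rule set_eqI, rule iffI)
    fix x assume "x \<in> setmul G (D i) (iv ` D i)"
    then obtain a b where ab: "a \<in> D i" "b \<in> D i" "s a = s b" "x = mm a (iv b)" using memC by blast
    hence "a = b" using injs that by blast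
    thus "x \<in> r ` D i" using ab by simp
  next
    fix x assume "x \<in> r ` D i"
    then obtain a where "a \<in> D i" "x = r a" by blast
    thus "x \<in> setmul G (D i) (iv ` D i)" using memC[of x i i] by force
  qed
  show ?thesis unfolding multisection_def
  proof (intro conjI)
    show "finite I" by (rule fin)
    show "\<forall>i\<in>I. \<forall>j\<in>I. bisection G (setmul G (D i) (iv ` D j))" using b1 by blast
    show "\<forall>i\<in>I. \<forall>j\<in>I. \<forall>k\<in>I. setmul G (setmul G (D i) (iv ` D j)) (setmul G (D j) (iv ` D k)) =
        setmul G (D i) (iv ` D k)" using b2 by blast
    show "\<forall>i\<in>I. setmul G (D i) (iv ` D i) \<subseteq> U0" using Cii by auto
    show "\<forall>i\<in>I. \<forall>j\<in>I. i \<noteq> j \<longrightarrow> setmul G (D i) (iv ` D i) \<inter> setmul G (D j) (iv ` D j) = {}"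
      using Cii disj by auto
  qed
qed

lemma C_base:
  assumes "W \<subseteq> U0" "s ` D' \<subseteq> W"
  shows "setmul G D' (iv ` W) = D'"
proof -
  have "iv ` W = W" using assms(1) iv_unit by (auto simp: image_iff) (metis iv_unit subsetD)
  moreover have "setmul G D' W = D'"
  proof (rule set_eqI, rule iffI)
    fix x assume "x \<in> setmul G D' W"
    then obtain d w where "d \<in> D'" "w \<in> W" "s d = r w" "x = mm d w" unfolding setmul_def by blast
    moreover have "r w = w" using \<open>w \<in> W\<close> assms(1) unit_r by blast
    ultimately show "x \<in> D'" by (metis mul_s)
  next
    fix x assume x: "x \<in> D'"
    hence "s x \<in> W" using assms(2) by blast
    moreover have "r (s x) = s x" by simp
    ultimately show "x \<in> setmul G D' W" unfolding setmul_def using x mul_s[of x] by force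
  qed
  ultimately show ?thesis by simp
qed

lemma fibre_boundary:
  "fibre G (setmul G K B - B) v = setmul G K (fibre G B v) - fibre G B v"
  unfolding fibre_def setmul_def by auto blast+

end


context SG begin

lemma principal_rinj:
  assumes pr: "principal G" and a: "s a = s b" "r a = r b" shows "a = b"
proof -
  define g where "g = mm a (iv b)"
  have sg: "s g = r b" and rg: "r g = r a" unfolding g_def using a by auto
  hence "g \<in> U0" using pr a unfolding principal_def by auto
  have "mm g b = mm a (mm (iv b) b)" unfolding g_def using assoc[of a "iv b" b] a by simp
  also have "\<dots> = a" using a mul_s[of a] by simp
  finally have "mm g b = a" .
  moreover have "mm g b = b" using \<open>g \<in> U0\<close> sg unit_s by (metis mul_r)
  ultimately show ?thesis by simp
qed

lemma local_piece:
  assumes pr: "principal G" and K: "compact K"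
    and u: "u \<in> U0" and Fs: "\<forall>f\<in>F. s f = u" and uF: "u \<in> F" and fo: "foelner G K eps F"
  shows "\<exists>V. open V \<and> u \<in> V \<and> V \<subseteq> U0 \<and> (\<forall>W. compact W \<and> open W \<and> W \<subseteq> V \<longrightarrow>
     (\<exists>n C i0. compact_open_multisection G {..<n} C \<and> i0 < n \<and> C i0 i0 = W \<and>
        (\<forall>i<n. s ` C i i0 \<subseteq> W) \<and> (\<forall>i<n. \<forall>j<n. i \<noteq> j \<longrightarrow> C i i0 \<inter> C j i0 = {}) \<and>
        (\<forall>v\<in>W. foelner G K eps (fibre G (\<Union>i<n. C i i0) v))))"
proof -
  have finF: "finite F" using fo unfolding foelner_def by simp
  define n where "n = card F"
  obtain f where bf: "bij_betw f {..<n} F"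
    using ex_bij_betw_nat_finite[OF finF] unfolding n_def by (metis atLeast0LessThan)
  have fF: "\<And>i. i < n \<Longrightarrow> f i \<in> F" using bf bij_betwE by blast
  have finj: "\<And>i j. i < n \<Longrightarrow> j < n \<Longrightarrow> f i = f j \<Longrightarrow> i = j"
    using bf unfolding bij_betw_def inj_on_def by blast
  obtain i0 where i0: "i0 < n" "f i0 = u" using bf uF unfolding bij_betw_def by auto
  have sf: "\<And>i. i < n \<Longrightarrow> s (f i) = u" using fF Fs by blast
  have rdist: "r (f i) \<noteq> r (f j)" if "i < n" "j < n" "i \<noteq> j" for i j
  proof
    assume "r (f i) = r (f j)"
    moreover have "s (f i) = s (f j)" using sf that by simp
    ultimately have "f i = f j" using principal_rinj[OF pr] by blast
    thus False using finj that by blast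
  qed
  define R where "R i j P Q \<longleftrightarrow> (i < n \<longrightarrow> j < n \<longrightarrow> i \<noteq> j \<longrightarrow>
      open P \<and> open Q \<and> r (f i) \<in> P \<and> r (f j) \<in> Q \<and> P \<inter> Q = {})" for i j P Q
  have exR: "\<exists>P Q. R i j P Q" for i j
  proof (cases "i < n \<and> j < n \<and> i \<noteq> j")
    case True
    hence "r (f i) \<noteq> r (f j)" using rdist by blast
    then obtain P Q where PQ0: "open P" "open Q" "r (f i) \<in> P" "r (f j) \<in> Q" "P \<inter> Q = {}"
      using hausdorff[of "r (f i)" "r (f j)"] by blast
    have "R i j P Q" unfolding R_def using PQ0 by simp
    thus ?thesis by blast
  next
    case False
    have "R i j UNIV UNIV" unfolding R_def using False by auto
    thus ?thesis by blast
  qed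
  define P where "P i j = (SOME P. \<exists>Q. R i j P Q)" for i j
  define Q where "Q i j = (SOME Q. R i j (P i j) Q)" for i j
  have RPQ: "R i j (P i j) (Q i j)" for i j
  proof -
    have "\<exists>Q. R i j (P i j) Q" unfolding P_def using exR[of i j] by (rule someI_ex)
    thus ?thesis unfolding Q_def by (rule someI_ex)
  qed
  have PQ: "open (P i j) \<and> open (Q i j) \<and> r (f i) \<in> P i j \<and> r (f j) \<in> Q i j \<and> P i j \<inter> Q i j = {}"
    if "i < n" "j < n" "i \<noteq> j" for i j
    using RPQ[of i j] that unfolding R_def by blast
  define Ob where "Ob i = (\<Inter>j\<in>{..<n} - {i}. P i j \<inter> Q j i)" for i
  have oOb: "open (Ob i)" if "i < n" for i unfolding Ob_def using PQ that by (intro open_INT) auto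
  have rOb: "r (f i) \<in> Ob i" if "i < n" for i unfolding Ob_def using PQ that by auto
  have dOb: "Ob i \<inter> Ob j = {}" if "i < n" "j < n" "i \<noteq> j" for i j
  proof -
    have "Ob i \<subseteq> P i j" "Ob j \<subseteq> Q i j" unfolding Ob_def using that by auto
    thus ?thesis using PQ[OF that] by blast
  qed
  have "\<forall>i\<in>{..<n}. \<exists>B. compact B \<and> open B \<and> bisection G B \<and> f i \<in> B \<and>
      B \<subseteq> r -` Ob i \<inter> (if i = i0 then U0 else UNIV)"
  proof
    fix i assume i: "i \<in> {..<n}"
    have "open (r -` Ob i \<inter> (if i = i0 then U0 else UNIV))"
      using open_pre[OF cont_r oOb] i open_U0 by auto
    moreover have "f i \<in> r -` Ob i \<inter> (if i = i0 then U0 else UNIV)" using rOb i i0 u by auto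
    ultimately show "\<exists>B. compact B \<and> open B \<and> bisection G B \<and> f i \<in> B \<and>
      B \<subseteq> r -` Ob i \<inter> (if i = i0 then U0 else UNIV)" using ample by blast
  qed
  then obtain B where B: "\<And>i. i < n \<Longrightarrow> compact (B i) \<and> open (B i) \<and> bisection G (B i) \<and> f i \<in> B i \<and>
      B i \<subseteq> r -` Ob i \<inter> (if i = i0 then U0 else UNIV)"
    using bchoice[of "{..<n}"] by (metis lessThan_iff)
  have Bdisj: "B i \<inter> B j = {}" if "i < n" "j < n" "i \<noteq> j" for i j
  proof -
    have "B i \<subseteq> r -` Ob i" "B j \<subseteq> r -` Ob j" using B[OF that(1)] B[OF that(2)] by auto
    thus ?thesis using dOb[OF that] by blast
  qed
  have Bs: "a = b" if "i < n" "a \<in> B i" "b \<in> B i" "s a = s b" for i a b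
  proof -
    have "inj_on s (B i)" using B[OF that(1)] unfolding bisection_def by blast
    thus ?thesis using that inj_onD by metis
  qed
  have Bi0: "B i0 \<subseteq> U0" using B[OF i0(1)] by auto
  define BB where "BB = (\<Union>i<n. B i)"
  have cBB: "compact BB" unfolding BB_def by (rule compact_UN) (use B in auto)
  have oBB: "open BB" unfolding BB_def by (rule open_UN) (use B in auto)
  have fibu: "fibre G BB u = F"
  proof
    show "fibre G BB u \<subseteq> F"
    proof
      fix x assume "x \<in> fibre G BB u"
      then obtain i where i: "i < n" "x \<in> B i" "s x = u" unfolding BB_def fibre_def by auto
      have "f i \<in> B i" using B[OF i(1)] by blast
      hence "x = f i" using Bs[OF i(1) i(2)] sf[OF i(1)] i(3) by auto
      thus "x \<in> F" using fF i by simp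
    qed
    show "F \<subseteq> fibre G BB u"
    proof
      fix x assume "x \<in> F"
      then obtain i where "i < n" "f i = x" using bf unfolding bij_betw_def by auto
      note this
      moreover have "f i \<in> B i" using B[OF \<open>i < n\<close>] by blast
      ultimately show "x \<in> fibre G BB u" unfolding BB_def fibre_def using sf by auto
    qed
  qed
  define T where "T = setmul G K BB - BB"
  have cT: "compact T" unfolding T_def using compact_setmul[OF K cBB] oBB by (rule compact_diff)
  obtain Vu where Vu: "open Vu" "u \<in> Vu" "\<forall>v\<in>Vu. card (fibre G T v) \<le> card (fibre G T u)"
    using usc[OF cT] by blast
  have cTu: "real (card (fibre G T u)) \<le> eps * real n"
    using fo unfolding T_def fibre_boundary fibu foelner_def n_def by simp
  define V where "V = U0 \<inter> Vu \<inter> (\<Inter>i\<in>{..<n}. s ` B i)"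
  have oV: "open V" unfolding V_def using open_U0 Vu(1) B open_s by (intro open_Int open_INT) auto
  have uV: "u \<in> V" unfolding V_def using u Vu(2) B sf by (auto simp: image_iff) (metis)
  have VU: "V \<subseteq> U0" unfolding V_def by auto
  have main: "\<forall>W. compact W \<and> open W \<and> W \<subseteq> V \<longrightarrow>
     (\<exists>n C i0. compact_open_multisection G {..<n} C \<and> i0 < n \<and> C i0 i0 = W \<and>
        (\<forall>i<n. s ` C i i0 \<subseteq> W) \<and> (\<forall>i<n. \<forall>j<n. i \<noteq> j \<longrightarrow> C i i0 \<inter> C j i0 = {}) \<and>
        (\<forall>v\<in>W. foelner G K eps (fibre G (\<Union>i<n. C i i0) v)))"
  proof (intro allI impI)
    fix W assume W: "compact W \<and> open W \<and> W \<subseteq> V"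
    have WU: "W \<subseteq> U0" using W unfolding V_def by auto
    define D where "D i = B i \<inter> s -` W" for i
    define C where "C i j = setmul G (D i) (iv ` D j)" for i j
    have D1: "\<forall>i\<in>{..<n}. bisection G (D i)"
      using B unfolding D_def bisection_def by (auto intro: inj_on_subset)
    have D2: "\<forall>i\<in>{..<n}. \<forall>w\<in>W. \<exists>d\<in>D i. s d = w"
    proof (intro ballI)
      fix i w assume "i \<in> {..<n}" "w \<in> W"
      hence "w \<in> s ` B i" using W unfolding V_def by auto
      thus "\<exists>d\<in>D i. s d = w" unfolding D_def using \<open>w \<in> W\<close> by auto
    qed
    have D3: "\<forall>i\<in>{..<n}. s ` D i \<subseteq> W" unfolding D_def by auto
    have D4: "\<forall>i\<in>{..<n}. \<forall>j\<in>{..<n}. i \<noteq> j \<longrightarrow> r ` D i \<inter> r ` D j = {}"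
    proof (intro ballI impI)
      fix i j assume ij: "i \<in> {..<n}" "j \<in> {..<n}" "i \<noteq> j"
      have "r ` D i \<subseteq> Ob i" "r ` D j \<subseteq> Ob j" unfolding D_def using B ij by auto
      moreover have "Ob i \<inter> Ob j = {}" using dOb ij by auto
      ultimately show "r ` D i \<inter> r ` D j = {}" by blast
    qed
    have D5: "D i0 = W"
    proof
      show "D i0 \<subseteq> W" unfolding D_def using Bi0 unit_s by auto
      show "W \<subseteq> D i0"
      proof
        fix w assume w: "w \<in> W"
        hence "w \<in> s ` B i0" using W i0 unfolding V_def by auto
        then obtain b where "b \<in> B i0" "s b = w" by auto
        moreover hence "b = w" using Bi0 unit_s by auto
        ultimately show "w \<in> D i0" unfolding D_def using w by auto
      qed
    qed
    have clW: "closed (s -` W)" using closed_pre[OF cont_s compact_imp_closed] W by blast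
    have cD: "compact (D i)" "open (D i)" if "i < n" for i
      unfolding D_def using B[OF that] clW W open_pre[OF cont_s] by (auto intro: compact_Int_closed)
    have ms: "multisection G {..<n} C" unfolding C_def by (rule ms_alg[OF D1 D2 D3 D4]) simp
    have com: "compact_open_multisection G {..<n} C"
      unfolding compact_open_multisection_def
      using ms cD compact_setmul compact_iv open_setmul open_iv unfolding C_def by auto
    have Ci0: "C i i0 = D i" if "i < n" for i
      unfolding C_def D5 using C_base[OF WU] D3 that by auto
    have Cbase: "C i0 i0 = W" using Ci0[OF i0(1)] D5 by simp
    have Cs: "\<forall>i<n. s ` C i i0 \<subseteq> W" using Ci0 D3 by auto
    have Cd: "\<forall>i<n. \<forall>j<n. i \<noteq> j \<longrightarrow> C i i0 \<inter> C j i0 = {}"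
    proof (intro allI impI)
      fix i j assume ij: "i < n" "j < n" "i \<noteq> j"
      have "C i i0 \<subseteq> B i" "C j i0 \<subseteq> B j" using Ci0 ij unfolding D_def by auto
      thus "C i i0 \<inter> C j i0 = {}" using Bdisj[OF ij] by blast
    qed
    have Fo: "\<forall>v\<in>W. foelner G K eps (fibre G (\<Union>i<n. C i i0) v)"
    proof
      fix v assume v: "v \<in> W"
      have U1: "(\<Union>i<n. C i i0) = (\<Union>i<n. D i)" using Ci0 by simp
      have U2: "(\<Union>i<n. D i) = BB \<inter> s -` W" unfolding D_def BB_def by blast
      have fe: "fibre G (\<Union>i<n. C i i0) v = fibre G BB v"
        unfolding U1 U2 fibre_def using v by auto
      have vV: "v \<in> Vu" "\<forall>i<n. v \<in> s ` B i" using v W unfolding V_def by auto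
      define pick where "pick i = (SOME b. b \<in> B i \<and> s b = v)" for i
      have pk: "pick i \<in> B i \<and> s (pick i) = v" if "i < n" for i
      proof -
        have "\<exists>b. b \<in> B i \<and> s b = v" using vV(2) that by blast
        thus ?thesis unfolding pick_def by (rule someI_ex)
      qed
      have "inj_on pick {..<n}"
      proof (rule inj_onI)
        fix i j assume ij: "i \<in> {..<n}" "j \<in> {..<n}" "pick i = pick j"
        show "i = j"
        proof (rule ccontr)
          assume "i \<noteq> j"
          hence "B i \<inter> B j = {}" using Bdisj ij by simp
          moreover have "pick i \<in> B i" using pk ij(1) by simp
          moreover have "pick j \<in> B j" using pk ij(2) by simp
          ultimately show False using ij(3) by (metis disjoint_iff)
        qed
      qed
      moreover have "pick ` {..<n} \<subseteq> fibre G BB v" unfolding BB_def fibre_def using pk by auto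
      moreover have fbv: "finite (fibre G BB v)" using finite_fibre[OF cBB] .
      ultimately have "card {..<n} \<le> card (fibre G BB v)" by (rule card_inj_on_le)
      hence cn: "n \<le> card (fibre G BB v)" by simp
      have npos: "n > 0" using i0 by simp
      have ne: "fibre G BB v \<noteq> {}" using cn npos by auto
      have bd: "setmul G K (fibre G BB v) - fibre G BB v = fibre G T v"
        unfolding T_def fibre_boundary ..
      have fbd: "finite (fibre G T v)" using finite_fibre[OF cT] .
      have "real (card (fibre G T v)) \<le> real (card (fibre G T u))" using Vu(3) vV(1) by simp
      also have "\<dots> \<le> eps * real n" by (rule cTu)
      also have "\<dots> \<le> eps * real (card (fibre G BB v))"
      proof -
        have "eps \<ge> 0"
        proof (rule ccontr)
          assume "\<not> eps \<ge> 0"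
          hence "eps * real n < 0" using npos by (simp add: mult_neg_pos)
          thus False using cTu by simp
        qed
        thus ?thesis using cn by (simp add: mult_left_mono)
      qed
      finally show "foelner G K eps (fibre G (\<Union>i<n. C i i0) v)"
        unfolding fe foelner_def bd using fbv ne fbd by simp
    qed
    show "\<exists>n C i0. compact_open_multisection G {..<n} C \<and> i0 < n \<and> C i0 i0 = W \<and>
        (\<forall>i<n. s ` C i i0 \<subseteq> W) \<and> (\<forall>i<n. \<forall>j<n. i \<noteq> j \<longrightarrow> C i i0 \<inter> C j i0 = {}) \<and>
        (\<forall>v\<in>W. foelner G K eps (fibre G (\<Union>i<n. C i i0) v))"
      by (rule exI[of _ n], rule exI[of _ C], rule exI[of _ i0])
        (intro conjI, fact com, fact i0(1), fact Cbase, fact Cs, fact Cd, fact Fo)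
  qed
  show ?thesis by (rule exI[of _ V]) (intro conjI, fact oV, fact uV, fact VU, fact main)
qed

end


context SG begin

lemma main_loc:
  assumes pr: "principal G" and ufa: "ubiquitously_fiberwise_amenable G"
    and K: "compact K" and e: "eps > 0"
  shows "\<exists>S. normal_foelner_set G K eps S"
proof -
  define LP where "LP W n C i0 \<longleftrightarrow> compact_open_multisection G {..<n} C \<and> i0 < n \<and> C i0 i0 = W \<and>
        (\<forall>i<n. s ` C i i0 \<subseteq> W) \<and> (\<forall>i<n. \<forall>j<n. i \<noteq> j \<longrightarrow> C i i0 \<inter> C j i0 = {}) \<and>
        (\<forall>v\<in>W. foelner G K eps (fibre G (\<Union>i<n. C i i0) v))" for W n C i0
  define PV where "PV u V \<longleftrightarrow> open V \<and> u \<in> V \<and> V \<subseteq> U0 \<and>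
      (\<forall>W. compact W \<and> open W \<and> W \<subseteq> V \<longrightarrow> (\<exists>n C i0. LP W n C i0))" for u V
  have exV: "\<exists>V. PV u V" if u: "u \<in> U0" for u
  proof -
    obtain F where F: "\<forall>f\<in>F. s f = u" "u \<in> F" "foelner G K eps F"
      using foelner_at_unit[OF ufa K e u] by blast
    show ?thesis unfolding PV_def LP_def by (rule local_piece[OF pr K u F])
  qed
  define Vf where "Vf u = (SOME V. PV u V)" for u
  have Vf: "PV u (Vf u)" if "u \<in> U0" for u unfolding Vf_def using exV[OF that] by (rule someI_ex)
  have exW: "\<exists>B. compact B \<and> open B \<and> u \<in> B \<and> B \<subseteq> Vf u" if "u \<in> U0" for u
  proof -
    have "open (Vf u)" "u \<in> Vf u" using Vf[OF that] unfolding PV_def by auto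
    then obtain B where "compact B" "open B" "u \<in> B" "B \<subseteq> Vf u" using ample by blast
    thus ?thesis by blast
  qed
  define Wc where "Wc u = (SOME B. compact B \<and> open B \<and> u \<in> B \<and> B \<subseteq> Vf u)" for u
  have Wc: "compact (Wc u) \<and> open (Wc u) \<and> u \<in> Wc u \<and> Wc u \<subseteq> Vf u" if "u \<in> U0" for u
    unfolding Wc_def using exW[OF that] by (rule someI_ex)
  have WcU: "Wc u \<subseteq> U0" if "u \<in> U0" for u using Wc[OF that] Vf[OF that] unfolding PV_def by blast
  have "U0 \<subseteq> (\<Union>u\<in>U0. Wc u)" using Wc by blast
  then obtain Us where Us: "Us \<subseteq> U0" "finite Us" "U0 \<subseteq> (\<Union>u\<in>Us. Wc u)"
    using compactE_image[OF compact_U0, of U0 Wc] Wc by blast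
  define m where "m = card Us"
  obtain g where g: "bij_betw g {0..<m} Us" using ex_bij_betw_nat_finite[OF Us(2)] unfolding m_def by blast
  have gU: "g l \<in> U0" if "l < m" for l using g Us(1) that unfolding bij_betw_def by auto
  define A where "A l = Wc (g l)" for l
  define Wp where "Wp = disjointed A"
  have Wp_sub: "Wp l \<subseteq> Vf (g l)" if "l < m" for l
    unfolding Wp_def using disjointed_subset[of A l] Wc[OF gU[OF that]] unfolding A_def by blast
  have Wp_eq: "Wp l = A l - (\<Union>i\<in>{0..<l}. A i)" for l unfolding Wp_def disjointed_def ..
  have cWp: "compact (Wp l)" and oWp: "open (Wp l)" if "l < m" for l
  proof -
    have cA: "compact (A i)" "open (A i)" if "i < m" for i using Wc[OF gU[OF that]] unfolding A_def by auto
    have "open (\<Union>i\<in>{0..<l}. A i)" using cA that by (intro open_UN) auto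
    thus "compact (Wp l)" unfolding Wp_eq using cA that by (intro compact_diff) auto
    have "compact (\<Union>i\<in>{0..<l}. A i)" using cA that by (intro compact_UN) auto
    hence "closed (\<Union>i\<in>{0..<l}. A i)" by (rule compact_imp_closed)
    thus "open (Wp l)" unfolding Wp_eq using cA that by (intro open_Diff) auto
  qed
  have Wp_union: "(\<Union>l<m. Wp l) = U0"
  proof -
    have "(\<Union>l<m. Wp l) = (\<Union>l\<in>{0..<m}. A l)" unfolding Wp_def
      using finite_UN_disjointed_eq[where n=m and A=A] by (simp add: atLeast0LessThan)
    also have "\<dots> = (\<Union>u\<in>Us. Wc u)" unfolding A_def using g unfolding bij_betw_def
      by (metis image_image UN_simps(10) image_ident)
    also have "\<dots> = U0" using Us WcU by blast
    finally show ?thesis .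
  qed
  have Wp_disj: "Wp l \<inter> Wp l' = {}" if "l \<noteq> l'" for l l'
    unfolding Wp_def using less_disjoint_disjointed[of l l' A] less_disjoint_disjointed[of l' l A] that
    by (cases "l < l'") (auto simp: Int_commute)
  have exLP: "\<exists>x. LP (Wp l) (fst x) (fst (snd x)) (snd (snd x))" if "l < m" for l
  proof -
    have "PV (g l) (Vf (g l))" using Vf[OF gU[OF that]] .
    hence "\<exists>n C i0. LP (Wp l) n C i0" unfolding PV_def using cWp[OF that] oWp[OF that] Wp_sub[OF that] by blast
    then obtain n C i0 where "LP (Wp l) n C i0" by blast
    thus ?thesis by (intro exI[of _ "(n, C, i0)"]) simp
  qed
  define trip where "trip l = (SOME x. LP (Wp l) (fst x) (fst (snd x)) (snd (snd x)))" for l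
  define nn where "nn l = fst (trip l)" for l
  define CC where "CC l = fst (snd (trip l))" for l
  define ii where "ii l = snd (snd (trip l))" for l
  have LPl: "LP (Wp l) (nn l) (CC l) (ii l)" if "l < m" for l
    unfolding nn_def CC_def ii_def trip_def using exLP[OF that] by (rule someI_ex)
  have com: "compact_open_multisection G {..<nn l} (CC l)" and ii: "ii l < nn l"
    and base: "CC l (ii l) (ii l) = Wp l" and srcs: "\<forall>i<nn l. s ` CC l i (ii l) \<subseteq> Wp l"
    and dj: "\<forall>i<nn l. \<forall>j<nn l. i \<noteq> j \<longrightarrow> CC l i (ii l) \<inter> CC l j (ii l) = {}"
    and fo: "\<forall>v\<in>Wp l. foelner G K eps (fibre G (\<Union>i<nn l. CC l i (ii l)) v)"
    if "l < m" for l using LPl[OF that] unfolding LP_def by auto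
  have coC: "compact (CC l i (ii l)) \<and> open (CC l i (ii l))" if "l < m" "i < nn l" for l i
    using com[OF that(1)] ii[OF that(1)] that(2) unfolding compact_open_multisection_def by auto
  define S where "S = (\<Union>l<m. \<Union>i\<in>{..<nn l}. CC l i (ii l))"
  have cS: "compact S" unfolding S_def using coC by (intro compact_UN) auto
  have oS: "open S" unfolding S_def using coC by (intro open_UN) auto
  have disj: "\<forall>l<m. \<forall>l'<m. \<forall>i\<in>{..<nn l}. \<forall>i'\<in>{..<nn l'}. (l, i) \<noteq> (l', i') \<longrightarrow>
            CC l i (ii l) \<inter> CC l' i' (ii l') = {}"
  proof (intro allI impI ballI)
    fix l l' i i' assume l: "l < m" "l' < m" and i: "i \<in> {..<nn l}" "i' \<in> {..<nn l'}"
      and ne: "(l, i) \<noteq> (l', i')"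
    show "CC l i (ii l) \<inter> CC l' i' (ii l') = {}"
    proof (cases "l = l'")
      case True
      hence "i \<noteq> i'" using ne by simp
      thus ?thesis using dj[OF l(1)] i True by auto
    next
      case False
      have "s ` CC l i (ii l) \<subseteq> Wp l" "s ` CC l' i' (ii l') \<subseteq> Wp l'" using srcs l i by auto
      moreover have "Wp l \<inter> Wp l' = {}" using Wp_disj[OF False] .
      ultimately show ?thesis by blast
    qed
  qed
  have units: "U0 = (\<Union>l<m. CC l (ii l) (ii l))" using base Wp_union by simp
  have ldisj: "\<forall>l<m. \<forall>l'<m. l \<noteq> l' \<longrightarrow> CC l (ii l) (ii l) \<inter> CC l' (ii l') (ii l') = {}"
    using base Wp_disj by simp
  have ns: "normal_set G S"
    unfolding normal_set_def
  proof (intro conjI)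
    show "compact S" by (rule cS)
    show "open S" by (rule oS)
    show "\<exists>(m::nat) (I :: nat \<Rightarrow> nat set) (C :: nat \<Rightarrow> nat \<Rightarrow> nat \<Rightarrow> 'g set) (i0 :: nat \<Rightarrow> nat).
        (\<forall>l<m. compact_open_multisection G (I l) (C l) \<and> i0 l \<in> I l) \<and>
        S = (\<Union>l<m. \<Union>i\<in>I l. C l i (i0 l)) \<and>
        (\<forall>l<m. \<forall>l'<m. \<forall>i\<in>I l. \<forall>i'\<in>I l'. (l, i) \<noteq> (l', i') \<longrightarrow>
            C l i (i0 l) \<inter> C l' i' (i0 l') = {}) \<and>
        units G = (\<Union>l<m. C l (i0 l) (i0 l)) \<and>
        (\<forall>l<m. \<forall>l'<m. l \<noteq> l' \<longrightarrow> C l (i0 l) (i0 l) \<inter> C l' (i0 l') (i0 l') = {})"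
    proof (rule exI[of _ m], rule exI[of _ "\<lambda>l. {..<nn l}"], rule exI[of _ CC], rule exI[of _ ii],
        intro conjI)
      show "\<forall>l<m. compact_open_multisection G {..<nn l} (CC l) \<and> ii l \<in> {..<nn l}"
        using com ii by auto
      show "S = (\<Union>l<m. \<Union>i\<in>{..<nn l}. CC l i (ii l))" by (rule S_def)
      show "\<forall>l<m. \<forall>l'<m. \<forall>i\<in>{..<nn l}. \<forall>i'\<in>{..<nn l'}. (l, i) \<noteq> (l', i') \<longrightarrow>
            CC l i (ii l) \<inter> CC l' i' (ii l') = {}" by (rule disj)
      show "U0 = (\<Union>l<m. CC l (ii l) (ii l))" by (rule units)
      show "\<forall>l<m. \<forall>l'<m. l \<noteq> l' \<longrightarrow> CC l (ii l) (ii l) \<inter> CC l' (ii l') (ii l') = {}" by (rule ldisj)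
    qed
  qed
  have nf: "\<forall>u\<in>U0. foelner G K eps (fibre G S u)"
  proof
    fix u assume "u \<in> U0"
    then obtain l where l: "l < m" "u \<in> Wp l" using Wp_union by blast
    have "fibre G S u = fibre G (\<Union>i<nn l. CC l i (ii l)) u"
    proof
      show "fibre G (\<Union>i<nn l. CC l i (ii l)) u \<subseteq> fibre G S u"
        unfolding S_def fibre_def using l(1) by blast
      show "fibre G S u \<subseteq> fibre G (\<Union>i<nn l. CC l i (ii l)) u"
      proof
        fix x assume x: "x \<in> fibre G S u"
        then obtain l' i where li: "l' < m" "i < nn l'" "x \<in> CC l' i (ii l')" "s x = u"
          unfolding S_def fibre_def by auto
        have "s x \<in> Wp l'" using srcs[OF li(1)] li(2,3) by blast
        hence "l' = l" using Wp_disj l(2) li(4) by blast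
        thus "x \<in> fibre G (\<Union>i<nn l. CC l i (ii l)) u" using li unfolding fibre_def by auto
      qed
    qed
    thus "foelner G K eps (fibre G S u)" using fo[OF l(1)] l(2) by simp
  qed
  show ?thesis unfolding normal_foelner_set_def using ns nf by blast
qed

end

theorem mainTheorem9:
  fixes G :: "('g::t2_space) groupoid_ops"
  assumes "standing_groupoid G"
    and "principal G"
    and "ubiquitously_fiberwise_amenable G"
  shows "\<forall>K eps. compact K \<longrightarrow> eps > 0 \<longrightarrow> (\<exists>S. normal_foelner_set G K eps S)"
proof (intro allI impI)
  fix K :: "'g set" and eps :: real
  assume "compact K" "eps > 0"
  interpret SG G by (unfold_locales) (rule assms(1))
  show "\<exists>S. normal_foelner_set G K eps S" by (rule main_loc[OF assms(2,3) \<open>compact K\<close> \<open>eps > 0\<close>])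
qed


end
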